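(* Let $\epsilon>0$. Define the randomized mechanism $\mathcal{M}$ (the BiSample mechanism) with input $v\in[-1,1]$ as follows: sample $s\in\{0,1\}$ uniformly at random; if $s=0$, generate a Bernoulli variable $b\in\{0,1\}$ with $$\Pr[b=1]=\frac{1-e^{\epsilon}}{1+e^{\epsilon}}\cdot\frac{v}{2}+\frac12;$$ if $s=1$, generate a Bernoulli variable $b\in\{0,1\}$ with $$\Pr[b=1]=\frac{e^{\epsilon}-1}{e^{\epsilon}+1}\cdot\frac{v}{2}+\frac12;$$ and output the pair $\langle s,b\rangle$. Then $\mathcal{M}$ satisfies $\epsilon$-local differential privacy, i.e. for all $t_1,t_2\in[-1,1]$ and every output $o\in\{0,1\}\times\{0,1\}$, $$\Pr[\mathcal{M}(t_1)=o]\le e^{\epsilon}\cdot\Pr[\mathcal{M}(t_2)=o].$$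
   Context: A randomized mechanism $\mathcal{M}$ satisfies $\epsilon$-local differential privacy ($\epsilon$-LDP) if for every two inputs $t_1,t_2$ in its domain and every output $t^*$ in its range, $\Pr[\mathcal{M}(t_1)=t^*]\le \exp(\epsilon)\Pr[\mathcal{M}(t_2)=t^*]$. *)

theory Defs
  imports "HOL-Probability.Probability"
begin

text \<open>Outputs are pairs (s, b) with s, b in {0,1}, encoded as bool (True = 1).\<close>

definition bisample :: "real \<Rightarrow> real \<Rightarrow> (bool \<times> bool) pmf" where
  "bisample \<epsilon> v =
     do { s \<leftarrow> bernoulli_pmf (1/2);
          b \<leftarrow> (if \<not> s
                then bernoulli_pmf ((1 - exp \<epsilon>) / (1 + exp \<epsilon>) * (v / 2) + 1/2)
                else bernoulli_pmf ((exp \<epsilon> - 1) / (exp \<epsilon> + 1) * (v / 2) + 1/2));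
          return_pmf (s, b) }"

definition eps_LDP :: "real \<Rightarrow> 'a set \<Rightarrow> ('a \<Rightarrow> 'b pmf) \<Rightarrow> bool" where
  "eps_LDP \<epsilon> D M \<longleftrightarrow>
     (\<forall>t1\<in>D. \<forall>t2\<in>D. \<forall>out. pmf (M t1) out \<le> exp \<epsilon> * pmf (M t2) out)"

end

theory Submission
  imports Defs
begin

lemma pmf_bs:
  assumes "0 \<le> q0" "q0 \<le> 1" "0 \<le> q1" "q1 \<le> 1"
  and "q0 = (1 - exp e) / (1 + exp e) * (v / 2) + 1/2"
  and "q1 = (exp e - 1) / (exp e + 1) * (v / 2) + 1/2"
  shows "pmf (bisample e v) (s,b) = 1/2 * (if b then (if s then q1 else q0) else 1 - (if s then q1 else q0))"
  using assms unfolding bisample_def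
  by (cases s; cases b) (simp_all add: pmf_bind integral_bernoulli_pmf pmf_return indicator_def)

lemma bnd:
  fixes E c v :: real
  assumes "E > 1" "\<bar>c\<bar> = (E - 1) / (E + 1)" "\<bar>v\<bar> \<le> 1"
  shows "1 / (E + 1) \<le> c * (v/2) + 1/2 \<and> c * (v/2) + 1/2 \<le> E / (E + 1)"
proof -
  have a: "\<bar>c * v\<bar> \<le> (E - 1) / (E + 1)"
  proof -
    have "\<bar>c\<bar> * \<bar>v\<bar> \<le> \<bar>c\<bar> * 1" using assms(3) by (intro mult_left_mono) auto
    thus ?thesis using assms(2) by (simp add: abs_mult)
  qed
  have e1: "1 / (E + 1) = 1/2 - (E - 1) / (E + 1) / 2" using assms(1) by (simp add: field_simps)
  have e2: "E / (E + 1) = 1/2 + (E - 1) / (E + 1) / 2" using assms(1) by (simp add: field_simps)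
  have m: "c * (v / 2) = (c * v) / 2" by simp
  have a1: "c * v \<le> (E - 1) / (E + 1)" "- (c * v) \<le> (E - 1) / (E + 1)" using a by (simp_all only: abs_le_iff)
  have g: "\<And>x K::real. x \<le> K \<Longrightarrow> - x \<le> K \<Longrightarrow> 1/2 - K/2 \<le> x/2 + 1/2 \<and> x/2 + 1/2 \<le> 1/2 + K/2"
    by linarith
  show ?thesis unfolding e1 e2 m by (rule g[OF a1])
qed

theorem theorem1:
  fixes \<epsilon> :: real
  assumes "\<epsilon> > 0"
  shows "eps_LDP \<epsilon> {-1..1} (bisample \<epsilon>)"
proof -
  define E where "E = exp \<epsilon>"
  have E1: "E > 1" using assms by (simp add: E_def)
  have key: "\<And>v s b. v \<in> {-1..1} \<Longrightarrow> 1/2 * (1 / (E+1)) \<le> pmf (bisample \<epsilon> v) (s,b) \<and> pmf (bisample \<epsilon> v) (s,b) \<le> 1/2 * (E / (E+1))"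
  proof -
    fix v :: real and s b assume v: "v \<in> {-1..1}"
    hence va: "\<bar>v\<bar> \<le> 1" by auto
    define q0 where "q0 = (1 - E) / (1 + E) * (v / 2) + 1/2"
    define q1 where "q1 = (E - 1) / (E + 1) * (v / 2) + 1/2"
    have c0: "\<bar>(1 - E) / (1 + E)\<bar> = (E - 1) / (E + 1)" using E1 by (simp add: abs_div_pos add.commute)
    have c0': "\<bar>-((1 - E) / (1 + E))\<bar> = (E - 1) / (E + 1)" using c0 by simp
    have c1: "\<bar>(E - 1) / (E + 1)\<bar> = (E - 1) / (E + 1)" using E1 by simp
    have c1': "\<bar>-((E - 1) / (E + 1))\<bar> = (E - 1) / (E + 1)" using c1 by simp
    have b0: "1 / (E + 1) \<le> q0 \<and> q0 \<le> E / (E + 1)" using bnd[OF E1 c0 va] q0_def by simp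
    have b1: "1 / (E + 1) \<le> q1 \<and> q1 \<le> E / (E + 1)" using bnd[OF E1 c1 va] q1_def by simp
    have b0': "1 / (E + 1) \<le> 1 - q0 \<and> 1 - q0 \<le> E / (E + 1)" using bnd[OF E1 c0' va] q0_def by simp
    have b1': "1 / (E + 1) \<le> 1 - q1 \<and> 1 - q1 \<le> E / (E + 1)" using bnd[OF E1 c1' va] q1_def by simp
    have le1: "E / (E + 1) \<le> 1" "0 \<le> 1 / (E+1)" using E1 by auto
    have p: "pmf (bisample \<epsilon> v) (s,b) = 1/2 * (if b then (if s then q1 else q0) else 1 - (if s then q1 else q0))"
    proof (rule pmf_bs)
      show "0 \<le> q0" "q0 \<le> 1" "0 \<le> q1" "q1 \<le> 1" using b0 b1 le1 by linarith+
    qed (auto simp: q0_def q1_def E_def)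
    show "1/2 * (1 / (E+1)) \<le> pmf (bisample \<epsilon> v) (s,b) \<and> pmf (bisample \<epsilon> v) (s,b) \<le> 1/2 * (E / (E+1))"
    proof -
      let ?X = "(if b then (if s then q1 else q0) else 1 - (if s then q1 else q0))"
      have gen: "\<And>x. 1/(E+1) \<le> x \<and> x \<le> E/(E+1) \<Longrightarrow> 1/2*(1/(E+1)) \<le> 1/2*x \<and> 1/2*x \<le> 1/2*(E/(E+1))"
        by linarith
      have "1/(E+1) \<le> ?X \<and> ?X \<le> E/(E+1)"
        using b0 b1 b0' b1' by (cases s; cases b) (simp_all del: divide_le_eq le_divide_eq)
      thus ?thesis unfolding p by (rule gen)
    qed
  qed
  have "pmf (bisample \<epsilon> t1) out \<le> E * pmf (bisample \<epsilon> t2) out"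
    if "t1 \<in> {-1..1}" "t2 \<in> {-1..1}" for t1 t2 out
  proof -
    obtain s b where o: "out = (s,b)" by (cases out)
    have "pmf (bisample \<epsilon> t1) out \<le> 1/2 * (E / (E+1))" using key[OF that(1)] o by auto
    also have "\<dots> = E * (1/2 * (1 / (E+1)))" by simp
    also have "\<dots> \<le> E * pmf (bisample \<epsilon> t2) out" using key[OF that(2)] o E1 by (intro mult_left_mono) auto
    finally show ?thesis .
  qed
  thus ?thesis unfolding eps_LDP_def E_def by blast
qed

end
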